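(* Let $z,b$ be non-singular complex $r\times r$ matrices. Then $$\bar z\,{}^tz=\bar b\,{}^tb,\qquad {}^tz\,\bar z=b^\ast b,\qquad b\,{}^tz=z\,{}^tb$$ hold if and only if $b=USV^\ast$ and $z=USW\,{}^tV$ for some positive definite real diagonal matrix $S$ and unitary matrices $U,V,W$ with ${}^tW=W$ and $WS=SW$.
   Context: ${}^tM$ denotes the transpose, $\bar M$ the entrywise complex conjugate, and $M^\ast={}^t\bar M$. *)

theory Defs
  imports "HOL-Analysis.Analysis"
begin

definition mat_cnj :: "complex^'n^'m \<Rightarrow> complex^'n^'m" where
  "mat_cnj A = (\<chi> i j. cnj (A $ i $ j))"

definition mat_adj :: "complex^'n^'m \<Rightarrow> complex^'m^'n" where
  "mat_adj A = transpose (mat_cnj A)"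

definition unitary_mat :: "complex^'n^'n \<Rightarrow> bool" where
  "unitary_mat U \<longleftrightarrow> U ** mat_adj U = mat 1 \<and> mat_adj U ** U = mat 1"

definition pos_real_diag :: "complex^'n^'n \<Rightarrow> bool" where
  "pos_real_diag S \<longleftrightarrow> (\<exists>d :: 'n \<Rightarrow> real. (\<forall>i. d i > 0) \<and>
      S = (\<chi> i j. if i = j then complex_of_real (d i) else 0))"

end

theory Submission
  imports Defs
begin

lemma mat_cnj_mult: "mat_cnj (A ** B) = mat_cnj A ** mat_cnj (B::complex^_^_)"
  by (simp add: mat_cnj_def matrix_matrix_mult_def vec_eq_iff)

lemma mat_cnj_cnj[simp]: "mat_cnj (mat_cnj A) = A"
  by (simp add: mat_cnj_def vec_eq_iff)

lemma mat_cnj_transpose: "mat_cnj (transpose A) = transpose (mat_cnj A)"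
  by (simp add: mat_cnj_def transpose_def vec_eq_iff)

lemma mat_cnj_one[simp]: "mat_cnj (mat 1) = mat 1"
  by (simp add: mat_cnj_def mat_def vec_eq_iff)

lemma mult_cancel_mid: "A ** B = mat 1 \<Longrightarrow> X ** A ** B = (X::complex^'n^'n)"
  by (metis matrix_mul_assoc matrix_mul_rid)

lemma mult_cancel_left: "A ** B = mat 1 \<Longrightarrow> A ** B = (mat 1::complex^'n^'n)"
  by simp

lemma unitaryD:
  assumes "unitary_mat U"
  shows "transpose (mat_cnj U) ** U = mat 1" "U ** transpose (mat_cnj U) = mat 1"
    "transpose U ** mat_cnj U = mat 1" "mat_cnj U ** transpose U = mat 1"
proof -
  show 1: "transpose (mat_cnj U) ** U = mat 1" "U ** transpose (mat_cnj U) = mat 1"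
    using assms by (auto simp: unitary_mat_def mat_adj_def)
  show "transpose U ** mat_cnj U = mat 1"
    using arg_cong[OF 1(1), of mat_cnj] by (simp add: mat_cnj_mult mat_cnj_transpose)
  show "mat_cnj U ** transpose U = mat 1"
    using arg_cong[OF 1(2), of mat_cnj] by (simp add: mat_cnj_mult mat_cnj_transpose)
qed

lemmas norm_simps = matrix_mul_assoc matrix_transpose_mul mat_cnj_mult mat_cnj_transpose mat_adj_def

lemma core:
  fixes U V S W b z :: "complex^'n^'n"
  assumes U: "unitary_mat U" and V: "unitary_mat V" and St: "transpose S = S" and Sc: "mat_cnj S = S"
    and b: "b = U ** S ** mat_adj V" and z: "z = U ** S ** W ** transpose V"
  shows "mat_cnj z ** transpose z = mat_cnj U ** S ** mat_cnj W ** transpose W ** S ** transpose U"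
    "mat_cnj b ** transpose b = mat_cnj U ** S ** S ** transpose U"
    "transpose z ** mat_cnj z = V ** transpose W ** S ** S ** mat_cnj W ** transpose (mat_cnj V)"
    "mat_adj b ** b = V ** S ** S ** transpose (mat_cnj V)"
    "b ** transpose z = U ** S ** transpose W ** S ** transpose U"
    "z ** transpose b = U ** S ** W ** S ** transpose U"
  using unitaryD[OF U] unitaryD[OF V]
  by (simp_all add: b z norm_simps St Sc mult_cancel_mid)

definition diagm :: "('n \<Rightarrow> real) \<Rightarrow> complex^'n^'n" where
  "diagm s = (\<chi> i j. if i = j then complex_of_real (s i) else 0)"

lemma diagm_transpose[simp]: "transpose (diagm s) = diagm s"
  by (simp add: diagm_def transpose_def vec_eq_iff)

lemma diagm_cnj[simp]: "mat_cnj (diagm s) = diagm s"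
  by (simp add: diagm_def mat_cnj_def vec_eq_iff)

lemma mult_diagm_right: "(A ** diagm s) $ i $ j = A $ i $ j * s j"
  by (simp add: diagm_def matrix_matrix_mult_def if_distrib if_distribR sum.delta' cong: if_cong)

lemma mult_diagm_left: "(diagm s ** A) $ i $ j = s i * A $ i $ j"
  by (simp add: diagm_def matrix_matrix_mult_def if_distrib if_distribR sum.delta cong: if_cong)

lemma diagm_mult: "diagm s ** diagm t = diagm (\<lambda>i. s i * t i)"
  by (simp add: vec_eq_iff mult_diagm_right) (simp add: diagm_def)

lemma diagm_one: "(\<And>i. s i = 1) \<Longrightarrow> diagm s = mat 1"
  by (simp add: diagm_def mat_def vec_eq_iff)

lemma comm_mid: "A ** B = C ** D \<Longrightarrow> X ** A ** B = X ** C ** (D::complex^'n^'n)"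
  by (metis matrix_mul_assoc)

lemma comm_mid3: "A ** B ** C = D ** E ** F \<Longrightarrow> X ** A ** B ** C = X ** D ** E ** (F::complex^'n^'n)"
  by (metis matrix_mul_assoc)


definition cinner :: "complex^'n \<Rightarrow> complex^'n \<Rightarrow> complex" where
  "cinner x y = (\<Sum>i\<in>UNIV. cnj (x$i) * y$i)"

lemma Re_cinner: "Re (cinner x y) = inner x y"
  by (simp add: cinner_def inner_vec_def inner_complex_def)

lemma cinner_self: "cinner x x = complex_of_real (inner x x)"
  by (rule complex_eqI) (simp_all add: Re_cinner, simp add: cinner_def Im_sum)

lemma cinner_adj: "cinner x (A *v y) = cinner (mat_adj A *v x) y"
  unfolding cinner_def matrix_vector_mult_def mat_adj_def mat_cnj_def transpose_def
  by (simp add: sum_distrib_left sum_distrib_right mult_ac) (rule sum.swap)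

lemma vsc: "(c *\<^sub>R x) $ i = complex_of_real c * (x::complex^'n) $ i"
  by (simp only: vector_scaleR_component) (simp add: scaleR_conv_of_real)

lemma cinner_add_right: "cinner e (x + y) = cinner e x + cinner e y"
  by (simp add: cinner_def algebra_simps sum.distrib)

lemma cinner_diff_right: "cinner e (x - y) = cinner e x - cinner e y"
  by (simp add: cinner_def algebra_simps sum_subtractf)

lemma cinner_scaleR_right: "cinner e (c *\<^sub>R x) = of_real c * cinner e x"
  by (simp add: cinner_def sum_distrib_left vsc mult_ac del: vector_scaleR_component)

lemma cinner_smult_right: "cinner e (c *s x) = c * cinner e x"
  by (simp add: cinner_def sum_distrib_left mult_ac)

lemma cinner_smult_left: "cinner (c *s e) x = cnj c * cinner e x"
  by (simp add: cinner_def sum_distrib_left mult_ac)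

lemma cinner_commute: "cinner y x = cnj (cinner x y)"
  by (simp add: cinner_def mult.commute)

lemma mv_scaleR: "A *v (c *\<^sub>R x) = c *\<^sub>R (A *v (x::complex^'n))"
  by (simp add: vec_eq_iff matrix_vector_mult_def vsc sum_distrib_left mult_ac del: vector_scaleR_component)

lemma scaleR_smult: "c *\<^sub>R (x::complex^'n) = complex_of_real c *s x"
  by (simp add: vec_eq_iff vsc del: vector_scaleR_component)

lemma herm_inner: assumes "mat_adj A = A" shows "inner x (A *v y) = inner (A *v x) y"
  using cinner_adj[of x A y] assms by (metis Re_cinner)

lemma quad_zero:
  fixes a b :: real
  assumes "\<And>t. 2*t*a + t^2*b \<le> 0"
  shows "a = 0"
proof (rule ccontr)
  assume a: "a \<noteq> 0"
  define c where "c = \<bar>b\<bar> + 1"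
  have pos: "c > 0" "2 * c + b > 0" unfolding c_def by auto
  define t where "t = a / c"
  have e: "a = t * c" using pos unfolding t_def by simp
  have "c * c * (2*t*a + t^2*b) = a * a * (2*c + b)"
    unfolding e power2_eq_square by algebra
  moreover have "a * a * (2*c + b) > 0"
  proof -
    have "a * a > 0" using a by (auto simp: zero_less_mult_iff linorder_neq_iff)
    then show ?thesis using pos(2) by (rule mult_pos_pos)
  qed
  moreover have "2*t*a + t^2*b \<le> 0" by (rule assms)
  ultimately show False using pos
    by (metis mult_nonneg_nonpos not_less zero_le_mult_iff less_imp_le)
qed

lemma eigen_in_complement:
  fixes A :: "complex^'n^'n"
  assumes herm: "mat_adj A = A" and Einv: "\<forall>e\<in>E. \<exists>c. A *v e = c *s e"
    and x0: "x0 \<noteq> 0" "\<forall>e\<in>E. cinner e x0 = 0"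
  shows "\<exists>w. norm w = 1 \<and> (\<forall>e\<in>E. cinner e w = 0) \<and> (\<exists>c::real. A *v w = complex_of_real c *s w)"
proof -
  define M where "M = {x. \<forall>e\<in>E. cinner e x = 0}"
  have Minv: "A *v x \<in> M" if "x \<in> M" for x
  proof -
    { fix e assume e: "e \<in> E"
      then obtain c where c: "A *v e = c *s e" using Einv by blast
      have "cinner e (A *v x) = cinner (A *v e) x" using cinner_adj[of e A x] herm by simp
      also have "\<dots> = 0" using c that e by (simp add: cinner_smult_left M_def)
      finally have "cinner e (A *v x) = 0" . }
    then show ?thesis by (simp add: M_def)
  qed
  have Mlin: "x + c *\<^sub>R y \<in> M" "x - c *\<^sub>R y \<in> M" if "x \<in> M" "y \<in> M" for x y c
    using that by (auto simp: M_def cinner_add_right cinner_diff_right cinner_scaleR_right)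
  have Msc: "c *\<^sub>R y \<in> M" if "y \<in> M" for y c
    using that by (auto simp: M_def cinner_scaleR_right)
  have cM: "closed M"
  proof -
    have "M = (\<Inter>e\<in>E. {x. cinner e x = 0})" by (auto simp: M_def)
    moreover have "closed {x. cinner e x = 0}" for e
      unfolding cinner_def by (intro closed_Collect_eq continuous_intros)
    ultimately show ?thesis by auto
  qed
  define K where "K = sphere 0 1 \<inter> M"
  have cK: "compact K" unfolding K_def using cM by (intro compact_Int_closed) auto
  have x0M: "x0 \<in> M" using x0 by (simp add: M_def)
  have neK: "K \<noteq> {}"
  proof -
    have "(1 / norm x0) *\<^sub>R x0 \<in> K" using x0M x0(1) Msc by (auto simp: K_def)
    then show ?thesis by blast
  qed
  define g where "g x = inner x (A *v x)" for x
  have contg: "continuous_on K g"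
    unfolding g_def by (intro continuous_intros matrix_vector_mult_linear_continuous_on)
  obtain w where wK: "w \<in> K" and wmax: "\<And>y. y \<in> K \<Longrightarrow> g y \<le> g w"
    using continuous_attains_sup[OF cK neK contg] by blast
  define l where "l = g w"
  have wM: "w \<in> M" and nw: "norm w = 1" using wK by (auto simp: K_def)
  have bound: "g x \<le> l * (norm x)^2" if "x \<in> M" for x
  proof (cases "x = 0")
    case True then show ?thesis by (simp add: g_def)
  next
    case False
    let ?y = "(1 / norm x) *\<^sub>R x"
    have "?y \<in> K" using that False Msc by (auto simp: K_def)
    hence "g ?y \<le> l" using wmax l_def by blast
    moreover have "g ?y = g x / (norm x)^2"
      by (simp add: g_def mv_scaleR power2_eq_square)
    ultimately show ?thesis using False by (simp add: field_simps)
  qed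
  have orth: "inner u (A *v w - l *\<^sub>R w) = 0" if "u \<in> M" for u
  proof -
    let ?a = "inner u (A *v w) - l * inner u w"
    let ?b = "g u - l * (norm u)^2"
    have "2*t*?a + t^2*?b \<le> 0" for t
    proof -
      have "g (w + t *\<^sub>R u) \<le> l * (norm (w + t *\<^sub>R u))^2"
        using bound Mlin(1)[OF wM that] by blast
      moreover have "g (w + t *\<^sub>R u) = l + 2*t*inner u (A *v w) + t^2 * g u"
        proof -
          have hw: "inner w (A *v u) = inner u (A *v w)"
            using herm_inner[OF herm, of w u] by (simp add: inner_commute)
          have "g (w + t *\<^sub>R u) = inner w (A *v w) + t * inner w (A *v u) + t * inner u (A *v w)
              + t * t * inner u (A *v u)"
            unfolding g_def matrix_vector_right_distrib mv_scaleR
            by (simp add: inner_add_left inner_add_right algebra_simps)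
          then show ?thesis using hw by (simp add: g_def l_def power2_eq_square)
        qed
      moreover have "(norm (w + t *\<^sub>R u))^2 = 1 + 2*t*inner u w + t^2 * (norm u)^2"
      proof -
        have "(norm (w + t *\<^sub>R u))^2 = inner w w + t * inner w u + t * inner u w + t * t * inner u u"
          unfolding power2_norm_eq_inner by (simp add: inner_add_left inner_add_right algebra_simps)
        moreover have "inner w w = 1" using nw by (simp add: power2_norm_eq_inner[symmetric])
        ultimately show ?thesis by (simp add: inner_commute[of w u] dot_square_norm power2_eq_square)
      qed
      ultimately show ?thesis by (simp add: algebra_simps power2_eq_square)
    qed
    then have "?a = 0" by (rule quad_zero)
    then show ?thesis by (simp add: inner_diff_right)
  qed
  define u where "u = A *v w - l *\<^sub>R w"
  have "u \<in> M" unfolding u_def using Mlin(2)[OF Minv[OF wM] wM] .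
  then have "inner u u = 0" using orth u_def by simp
  then have "u = 0" by simp
  then have "A *v w = complex_of_real l *s w" by (simp add: u_def scaleR_smult)
  then show ?thesis using nw wM by (auto simp: M_def)
qed


lemma exists_orth:
  fixes L :: "(complex^'n) list"
  assumes "length L < CARD('n)"
  shows "\<exists>x. x \<noteq> 0 \<and> (\<forall>e\<in>set L. cinner e x = 0)"
proof -
  define T where "T = set L \<union> (\<lambda>e. \<i> *s e) ` set L"
  have fT: "finite T" by (simp add: T_def)
  have "card T \<le> card (set L) + card ((\<lambda>e. \<i> *s e) ` set L)"
    unfolding T_def by (rule card_Un_le)
  also have "\<dots> \<le> 2 * length L"
    using card_image_le[of "set L" "\<lambda>e. \<i> *s e"] card_length[of L] by simp
  finally have "dim T < DIM(complex^'n)"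
    using dim_le_card'[OF fT] assms by simp
  then obtain x :: "complex^'n" where x: "x \<noteq> 0" "\<And>y. y \<in> span T \<Longrightarrow> orthogonal x y"
    using orthogonal_to_subspace_exists by blast
  have "cinner e x = 0" if e: "e \<in> set L" for e
  proof -
    have o1: "inner x e = 0" using x(2)[of e] e by (auto simp: T_def orthogonal_def intro: span_base)
    have o2: "inner x (\<i> *s e) = 0" using x(2)[of "\<i> *s e"] e
      by (auto simp: T_def orthogonal_def intro: span_base)
    have "Re (cinner e x) = 0" using o1 by (simp add: Re_cinner inner_commute)
    moreover have "Re (cinner (\<i> *s e) x) = 0" using o2 by (simp add: Re_cinner inner_commute)
    then have "Im (cinner e x) = 0" by (simp add: cinner_smult_left)
    ultimately show ?thesis by (simp add: complex_eq_iff)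
  qed
  then show ?thesis using x(1) by blast
qed

lemma onb_exists:
  fixes A :: "complex^'n^'n"
  assumes herm: "mat_adj A = A"
  shows "k \<le> CARD('n) \<Longrightarrow> \<exists>L. length L = k \<and> (\<forall>i<k. \<forall>j<k. cinner (L!i) (L!j) = (if i = j then 1 else 0))
     \<and> (\<forall>i<k. \<exists>c::real. A *v (L!i) = complex_of_real c *s (L!i))"
proof (induction k)
  case 0 then show ?case by simp
next
  case (Suc k)
  then obtain L where L: "length L = k" "\<forall>i<k. \<forall>j<k. cinner (L!i) (L!j) = (if i = j then 1 else 0)"
    "\<forall>i<k. \<exists>c::real. A *v (L!i) = complex_of_real c *s (L!i)" by auto
  obtain x0 where x0: "x0 \<noteq> 0" "\<forall>e\<in>set L. cinner e x0 = 0"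
    using exists_orth[of L] L(1) Suc.prems by auto
  have Einv: "\<forall>e\<in>set L. \<exists>c. A *v e = c *s e"
    using L(1,3) by (metis in_set_conv_nth)
  obtain w c where w: "norm w = 1" "\<forall>e\<in>set L. cinner e w = 0" "A *v w = complex_of_real c *s w"
    using eigen_in_complement[OF herm Einv x0] by blast
  define L' where "L' = L @ [w]"
  have ww: "cinner w w = 1" using w(1) by (simp add: cinner_self dot_square_norm)
  have we: "cinner w e = 0" if "e \<in> set L" for e
    using w(2) that cinner_commute[of w e] by simp
  show ?case
  proof (intro exI[of _ L'] conjI allI impI)
    show "length L' = Suc k" using L(1) by (simp add: L'_def)
    fix i j assume i: "i < Suc k" and j: "j < Suc k"
    show "cinner (L'!i) (L'!j) = (if i = j then 1 else 0)"
      using L(1,2) i j ww w(2) we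
      by (cases "i = k"; cases "j = k") (auto simp: L'_def nth_append)
  next
    fix i assume i: "i < Suc k"
    show "\<exists>c::real. A *v (L'!i) = complex_of_real c *s (L'!i)"
      using L(1,3) i w(3) by (cases "i = k") (auto simp: L'_def nth_append)
  qed
qed

lemma spectral:
  fixes A :: "complex^'n^'n"
  assumes herm: "mat_adj A = A"
  shows "\<exists>V d. unitary_mat V \<and> A ** V = V ** diagm d"
proof -
  obtain L where L: "length L = CARD('n)"
    "\<forall>i<CARD('n). \<forall>j<CARD('n). cinner (L!i) (L!j) = (if i = j then 1 else 0)"
    "\<forall>i<CARD('n). \<exists>c::real. A *v (L!i) = complex_of_real c *s (L!i)"
    using onb_exists[OF herm, of "CARD('n)"] by auto
  obtain h :: "'n \<Rightarrow> nat" where h: "bij_betw h UNIV {0..<CARD('n)}"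
    using ex_bij_betw_finite_nat[of "UNIV::'n set"] by auto
  have hlt: "h j < CARD('n)" for j using h by (auto simp: bij_betw_def)
  have hinj: "h i = h j \<longleftrightarrow> i = j" for i j using h by (auto simp: bij_betw_def inj_on_def)
  have "\<forall>j. \<exists>c::real. A *v (L ! h j) = complex_of_real c *s (L ! h j)"
    using L(3) hlt by blast
  then obtain d :: "'n \<Rightarrow> real" where d: "\<And>j. A *v (L ! h j) = complex_of_real (d j) *s (L ! h j)"
    by metis
  define V :: "complex^'n^'n" where "V = (\<chi> r j. (L ! h j) $ r)"
  have VV: "mat_adj V ** V = mat 1"
  proof -
    have "(mat_adj V ** V) $ i $ j = cinner (L ! h i) (L ! h j)" for i j
      by (simp add: V_def mat_adj_def mat_cnj_def transpose_def matrix_matrix_mult_def cinner_def)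
    then show ?thesis using L(2) hlt hinj by (simp add: vec_eq_iff mat_def)
  qed
  have "unitary_mat V" using VV matrix_left_right_inverse unfolding unitary_mat_def by blast
  moreover have "A ** V = V ** diagm d"
  proof -
    have "(A ** V) $ r $ j = (A *v (L ! h j)) $ r" for r j
      by (simp add: V_def matrix_matrix_mult_def matrix_vector_mult_def)
    then show ?thesis using d by (simp add: vec_eq_iff mult_diagm_right V_def mult.commute)
  qed
  ultimately show ?thesis by blast
qed


lemma svd:
  fixes b :: "complex^'n^'n"
  assumes "invertible b"
  shows "\<exists>U V s. unitary_mat U \<and> unitary_mat V \<and> (\<forall>i. s i > 0) \<and> b = U ** diagm s ** mat_adj V"
proof -
  define H where "H = mat_adj b ** b"
  have "mat_adj H = H" by (simp add: H_def norm_simps)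
  then obtain V d where V: "unitary_mat V" and HV: "H ** V = V ** diagm d"
    using spectral by blast
  note uV = unitaryD[OF V]
  define C where "C = b ** V"
  have CC: "mat_adj C ** C = diagm d"
  proof -
    have "mat_adj C ** C = transpose (mat_cnj V) ** (H ** V)"
      by (simp add: C_def H_def norm_simps)
    also have "\<dots> = diagm d" using uV by (simp add: HV norm_simps)
    finally show ?thesis .
  qed
  have invV: "invertible V" using uV unfolding invertible_def by blast
  have "invertible C" unfolding C_def by (rule invertible_mult[OF assms invV])
  then obtain B where B: "B ** C = mat 1" unfolding invertible_def by blast
  have dpos: "d j > 0" for j
  proof -
    have "complex_of_real (d j) = (mat_adj C ** C) $ j $ j" by (simp add: CC diagm_def)
    also have "\<dots> = (\<Sum>r\<in>UNIV. complex_of_real ((cmod (C $ r $ j))^2))"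
      by (simp add: mat_adj_def mat_cnj_def transpose_def matrix_matrix_mult_def mult.commute
          complex_norm_square del: of_real_power)
    finally have dj: "d j = (\<Sum>r\<in>UNIV. (cmod (C $ r $ j))^2)"
      by (metis of_real_eq_iff of_real_sum)
    have "d j \<noteq> 0"
    proof
      assume "d j = 0"
      then have "\<forall>r. (cmod (C $ r $ j))^2 = 0" using dj
        by (simp add: sum_nonneg_eq_0_iff)
      then have "\<forall>r. C $ r $ j = 0" by simp
      then have "(B ** C) $ j $ j = 0" by (simp add: matrix_matrix_mult_def)
      then show False using B by (simp add: mat_def)
    qed
    moreover have "d j \<ge> 0" using dj by (simp add: sum_nonneg)
    ultimately show ?thesis by simp
  qed
  define s where "s j = sqrt (d j)" for j
  have spos: "s j > 0" for j using dpos by (simp add: s_def)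
  define U where "U = b ** V ** diagm (\<lambda>j. 1 / s j)"
  have "mat_adj U ** U = diagm (\<lambda>j. 1 / s j) ** (mat_adj C ** C) ** diagm (\<lambda>j. 1 / s j)"
    by (simp add: U_def C_def norm_simps)
  also have "\<dots> = mat 1"
    unfolding CC diagm_mult
  proof (rule diagm_one)
    fix i
    have "s i * s i = d i" using dpos[of i] by (simp add: s_def)
    then show "1 / s i * d i * (1 / s i) = 1" using spos[of i]
      by (metis (no_types) divide_self_if less_irrefl times_divide_eq_left times_divide_eq_right mult_1_left mult.commute)
  qed
  finally have UU: "mat_adj U ** U = mat 1" .
  have U: "unitary_mat U" using UU matrix_left_right_inverse unfolding unitary_mat_def by blast
  have "U ** diagm s ** mat_adj V = b ** V ** (diagm (\<lambda>j. 1 / s j) ** diagm s) ** mat_adj V"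
    by (simp add: U_def matrix_mul_assoc)
  also have "diagm (\<lambda>j. 1 / s j) ** diagm s = mat 1"
    using spos by (simp add: diagm_mult) (rule diagm_one, simp add: less_imp_neq[symmetric] dual_order.strict_implies_not_eq)
  finally have "U ** diagm s ** mat_adj V = b" using uV by (simp add: mat_adj_def mult_cancel_mid)
  then show ?thesis using U V spos by metis
qed

theorem lemma9:
  fixes z b :: "complex^'n^'n"
  assumes "invertible z" and "invertible b"
  shows "(mat_cnj z ** transpose z = mat_cnj b ** transpose b \<and>
          transpose z ** mat_cnj z = mat_adj b ** b \<and>
          b ** transpose z = z ** transpose b)
     \<longleftrightarrow> (\<exists>S U V W :: complex^'n^'n.
            pos_real_diag S \<and> unitary_mat U \<and> unitary_mat V \<and> unitary_mat W \<and>
            transpose W = W \<and> W ** S = S ** W \<and>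
            b = U ** S ** mat_adj V \<and> z = U ** S ** W ** transpose V)"
proof
  assume "\<exists>S U V W :: complex^'n^'n.
            pos_real_diag S \<and> unitary_mat U \<and> unitary_mat V \<and> unitary_mat W \<and>
            transpose W = W \<and> W ** S = S ** W \<and>
            b = U ** S ** mat_adj V \<and> z = U ** S ** W ** transpose V"
  then obtain S U V W :: "complex^'n^'n" where S: "pos_real_diag S" and U: "unitary_mat U"
    and V: "unitary_mat V" and W: "unitary_mat W" and Wt: "transpose W = W"
    and WS: "W ** S = S ** W" and b: "b = U ** S ** mat_adj V" and z: "z = U ** S ** W ** transpose V"
    by blast
  from S obtain d where S': "S = diagm d" unfolding pos_real_diag_def diagm_def by blast
  note c = core[OF U V _ _ b z, unfolded S', simplified, folded S']
  have Wc: "mat_cnj W ** W = mat 1" "W ** mat_cnj W = mat 1"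
    using unitaryD[OF W] Wt by (simp_all add: mat_cnj_transpose[symmetric])
  have WSS: "W ** S ** S = S ** S ** W" using WS by (metis matrix_mul_assoc)
  show "mat_cnj z ** transpose z = mat_cnj b ** transpose b \<and>
          transpose z ** mat_cnj z = mat_adj b ** b \<and>
          b ** transpose z = z ** transpose b"
    unfolding c using Wc by (simp add: Wt mult_cancel_mid comm_mid3[OF WSS])
next
  assume H: "mat_cnj z ** transpose z = mat_cnj b ** transpose b \<and>
          transpose z ** mat_cnj z = mat_adj b ** b \<and>
          b ** transpose z = z ** transpose b"
  obtain U V s where U: "unitary_mat U" and V: "unitary_mat V" and s: "\<forall>i. s i > 0"
    and b: "b = U ** diagm s ** mat_adj V"
    using svd[OF assms(2)] by blast
  define S where "S = diagm s"
  define Si where "Si = diagm (\<lambda>i. 1 / s i)"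
  have SSi: "S ** Si = mat 1" "Si ** S = mat 1"
    using s by (auto simp: S_def Si_def diagm_mult intro!: diagm_one) (metis less_irrefl)+
  have St: "transpose S = S" "mat_cnj S = S" "transpose Si = Si" "mat_cnj Si = Si"
    by (simp_all add: S_def Si_def)
  note uU = unitaryD[OF U] and uV = unitaryD[OF V]
  define W where "W = Si ** mat_adj U ** z ** mat_cnj V"
  have z: "z = U ** S ** W ** transpose V"
    using uU uV SSi by (simp add: W_def norm_simps mult_cancel_mid)
  note c = core[OF U V St(1,2) b[folded S_def] z]
  have E1: "mat_cnj U ** S ** mat_cnj W ** transpose W ** S ** transpose U = mat_cnj U ** S ** S ** transpose U"
    using H c by simp
  have E2: "V ** transpose W ** S ** S ** mat_cnj W ** transpose (mat_cnj V) = V ** S ** S ** transpose (mat_cnj V)"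
    using H c by simp
  have E3: "U ** S ** transpose W ** S ** transpose U = U ** S ** W ** S ** transpose U"
    using H c by simp
  have Wt: "transpose W = W"
    using arg_cong[OF E3, of "\<lambda>X. Si ** transpose (mat_cnj U) ** X ** mat_cnj U ** Si"] uU SSi
    by (simp add: norm_simps mult_cancel_mid)
  have Wc: "mat_cnj W ** W = mat 1"
    using arg_cong[OF E1, of "\<lambda>X. Si ** transpose U ** X ** mat_cnj U ** Si"] uU SSi
    by (simp add: norm_simps mult_cancel_mid Wt)
  have WU: "unitary_mat W"
    using Wc matrix_left_right_inverse unfolding unitary_mat_def mat_adj_def
    by (metis Wt mat_cnj_transpose)
  have E2': "W ** S ** S ** mat_cnj W = S ** S"
    using arg_cong[OF E2, of "\<lambda>X. transpose (mat_cnj V) ** X ** V"] uV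
    by (simp add: norm_simps mult_cancel_mid Wt)
  have E2'': "W ** S ** S = S ** S ** W"
    using arg_cong[OF E2', of "\<lambda>X. X ** W"] Wc by (simp add: norm_simps mult_cancel_mid)
  have WS: "W ** S = S ** W"
  proof -
    { fix i j
      have "W $ i $ j * (s j * s j) = (s i * s i) * W $ i $ j"
        using arg_cong[OF E2'', of "\<lambda>X. X $ i $ j"]
        by (simp add: S_def diagm_mult mult_diagm_left mult_diagm_right mult.assoc)
      hence "W $ i $ j * s j = s i * W $ i $ j"
      proof (cases "W $ i $ j = 0")
        case False
        hence "s j * s j = s i * s i"
          using \<open>W $ i $ j * (s j * s j) = (s i * s i) * W $ i $ j\<close> by (simp add: mult.commute flip: of_real_mult)
        hence "s j = s i" using s
          by (metis less_imp_le power2_eq_imp_eq power2_eq_square)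
        then show ?thesis by (simp add: mult.commute flip: of_real_mult)
      qed simp }
    then show ?thesis by (simp add: vec_eq_iff S_def mult_diagm_left mult_diagm_right)
  qed
  have "pos_real_diag S" unfolding pos_real_diag_def S_def diagm_def using s by blast
  then show "\<exists>S U V W :: complex^'n^'n.
            pos_real_diag S \<and> unitary_mat U \<and> unitary_mat V \<and> unitary_mat W \<and>
            transpose W = W \<and> W ** S = S ** W \<and>
            b = U ** S ** mat_adj V \<and> z = U ** S ** W ** transpose V"
    using U V WU Wt WS b z S_def by blast
qed

end
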